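(* Let $n\ge2$, let $L_1,\dots,L_n$ be finite lists of reals, each sorted in nondecreasing order, and fix $0\le\tau_{min}\le\tau_{max}$. Let $\|D\|=\sum_{i=1}^n |L_i|$ be the total size of the data. Then Algorithm-Chain runs in $O(\|D\|)$ time.
   Context: A tuple of indices $(p_1,\dots,p_n)$, with values $x_i=L_i[p_i]$, is valid if $x_{i+1}-x_i\in[\tau_{min},\tau_{max}]$ for $i=1,\dots,n-1$. The same algorithm and bound apply to ordered siblings, with $[-\delta,\delta]$ in place of $[\tau_{min},\tau_{max}]$. Algorithm-Chain, which computes a maximum matching (a largest sequence of valid tuples whose indices strictly increase in every list), is implemented as follows: 1. Keep pointers $P_1,\dots,P_n$, initially at the first entries, and a current pair index $i$, initially $1$. Let $x_k=L_k[P_k]$. 2. While every pointer lies within its list, do one of the following: - If $x_{i+1}-x_i<\tau_{min}$, advance $P_{i+1}$. - Else if $x_{i+1}-x_i\in[\tau_{min},\tau_{max}]$: if $i+1=n$, record $(P_1,\dots,P_n)$ as the next matched tuple, advance every pointer by one, and set $i\gets1$; otherwise set $i\gets i+1$. - Else ($x_{i+1}-x_i>\tau_{max}$), advance $P_i$ and set $i\gets\max(i-1,1)$. Arithmetic operations, comparisons and pointer moves cost unit time. *)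

theory Defs
  imports Complex_Main "HOL-Library.While_Combinator"
begin

text \<open>Lists and indices are 0-based:
  the lists are Ls!0, ..., Ls!(n-1); the current pair index i ranges over 0..n-2 and
  refers to the pair (i, i+1).  A state is (P, i, t): the pointer list P, the pair
  index i, and the running time t spent so far.\<close>

definition chain_val :: "real list list \<Rightarrow> nat list \<Rightarrow> nat \<Rightarrow> real" where
  "chain_val Ls P k = (Ls ! k) ! (P ! k)"

definition chain_cond :: "real list list \<Rightarrow> nat list \<times> nat \<times> nat \<Rightarrow> bool" where
  "chain_cond Ls s = (\<forall>k < length Ls. fst s ! k < length (Ls ! k))"

text \<open>One iteration of the loop body, together with its cost under the unit-cost model:
  one unit for evaluating the difference and comparing (and the loop test, which only
  needs to re-examine the pointers moved in the previous iteration), one unit per pointer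
  move, and on a match additionally n units for recording the tuple.\<close>
definition chain_step :: "real \<Rightarrow> real \<Rightarrow> real list list \<Rightarrow> nat list \<times> nat \<times> nat \<Rightarrow> nat list \<times> nat \<times> nat" where
  "chain_step tmin tmax Ls s =
     (case s of (P, i, t) \<Rightarrow>
       (let n = length Ls; d = chain_val Ls P (i+1) - chain_val Ls P i in
        if d < tmin then (P[i+1 := Suc (P ! (i+1))], i, t + 2)
        else if d \<le> tmax then
          (if i + 2 = n then (map Suc P, 0, t + 1 + 2 * n) else (P, i + 1, t + 1))
        else (P[i := Suc (P ! i)], i - 1, t + 2)))"

text \<open>Run of Algorithm-Chain: initial pointers at the first entries (cost n for the
  initialisation), pair index 0, time counter 0 (the O(n) pointer initialisation is not counted,
  since it is not bounded by ||D|| when all lists are empty).\<close>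
definition chain_run :: "real \<Rightarrow> real \<Rightarrow> real list list \<Rightarrow> (nat list \<times> nat \<times> nat) option" where
  "chain_run tmin tmax Ls =
     while_option (chain_cond Ls) (chain_step tmin tmax Ls) (replicate (length Ls) 0, 0, 0)"

definition data_size :: "real list list \<Rightarrow> nat" where
  "data_size Ls = (\<Sum>L\<leftarrow>Ls. length L)"

end

theory Submission
  imports Defs
begin

lemma sl_upd: "j < length P \<Longrightarrow> sum_list (P[j := Suc (P!j)]) = Suc (sum_list (P::nat list))"
  by (induction P arbitrary: j) (auto split: nat.splits)

lemma sl_suc: "sum_list (map Suc P) = sum_list P + length (P::nat list)"
  by (induction P) auto

lemma sl_le: "length P = length Ls \<Longrightarrow> \<forall>k<length Ls. P!k \<le> length (Ls!k) \<Longrightarrow> sum_list (P::nat list) \<le> data_size Ls"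
  unfolding data_size_def
proof (induction Ls arbitrary: P)
  case Nil then show ?case by simp
next
  case (Cons a Ls) then show ?case by (cases P) fastforce+
qed

lemma n_le: "\<forall>k<length Ls. Ls!k \<noteq> [] \<Longrightarrow> length Ls \<le> data_size Ls"
  unfolding data_size_def
proof (induction Ls)
  case Nil then show ?case by simp
next
  case (Cons a Ls)
  have "a \<noteq> []" using Cons.prems by (metis length_greater_0_conv nth_Cons_0 zero_less_Suc length_Cons)
  moreover have "\<forall>k<length Ls. Ls!k \<noteq> []" using Cons.prems by auto
  ultimately show ?case using Cons.IH by (cases a) auto
qed

definition Inv :: "real list list \<Rightarrow> nat list \<times> nat \<times> nat \<Rightarrow> bool" where
  "Inv Ls s = (case s of (P, i, t) \<Rightarrow>
     length P = length Ls \<and> (\<forall>k<length Ls. P!k \<le> length (Ls!k)) \<and> i + 2 \<le> length Ls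
     \<and> t \<le> 3 * sum_list P + i \<and> (t = 0 \<or> (\<forall>k<length Ls. Ls!k \<noteq> [])))"

lemma step_ok:
  assumes "Inv Ls s" "chain_cond Ls s"
  shows "Inv Ls (chain_step tmin tmax Ls s) \<and>
    (chain_step tmin tmax Ls s, s) \<in> measures [\<lambda>(P,i,t). data_size Ls - sum_list P, \<lambda>(P,i,t). length Ls - i]"
proof -
  obtain P i t where s: "s = (P, i, t)" by (cases s)
  let ?n = "length Ls"
  have lP: "length P = ?n" and le: "\<forall>k<?n. P!k \<le> length (Ls!k)" and i2: "i + 2 \<le> ?n"
    and tb: "t \<le> 3 * sum_list P + i"
    using assms(1) by (auto simp: Inv_def s)
  have lt: "\<forall>k<?n. P!k < length (Ls!k)" using assms(2) by (simp add: chain_cond_def s)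
  have ne: "\<forall>k<?n. Ls!k \<noteq> []" using lt by fastforce
  have S: "sum_list P < data_size Ls"
  proof -
    have "sum_list (P[0 := Suc (P!0)]) \<le> data_size Ls"
    proof (rule sl_le)
      show "length (P[0 := Suc (P!0)]) = length Ls" using lP by simp
      show "\<forall>k<length Ls. P[0 := Suc (P!0)] ! k \<le> length (Ls!k)"
      proof (intro allI impI)
        fix k assume k: "k < length Ls"
        show "P[0 := Suc (P!0)] ! k \<le> length (Ls!k)"
          using lt le k lP by (cases "k = 0") (auto simp: nth_list_update Suc_le_eq)
      qed
    qed
    moreover have "Ls \<noteq> []" using i2 by auto
    ultimately show ?thesis using sl_upd[of 0 P] lP by simp
  qed
  define d where "d = chain_val Ls P (i+1) - chain_val Ls P i"
  consider "d < tmin" | "\<not> d < tmin" "d \<le> tmax" "i + 2 = ?n" | "\<not> d < tmin" "d \<le> tmax" "i + 2 \<noteq> ?n"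
    | "\<not> d < tmin" "\<not> d \<le> tmax" by linarith
  then show ?thesis
  proof cases
    case 1
    hence st: "chain_step tmin tmax Ls s = (P[i+1 := Suc (P ! (i+1))], i, t + 2)"
      by (simp add: chain_step_def s d_def Let_def)
    have u: "sum_list (P[i+1 := Suc (P ! (i+1))]) = Suc (sum_list P)" using sl_upd lP i2 by simp
    have "P[i+1 := Suc (P ! (i+1))] ! k \<le> length (Ls!k)" if "k < ?n" for k
      using lt le that lP by (cases "k = i+1"; cases "k = i") (auto simp: nth_list_update Suc_le_eq)
    then show ?thesis using u lP i2 tb ne S unfolding st by (auto simp: Inv_def s)
  next
    case 2
    hence st: "chain_step tmin tmax Ls s = (map Suc P, 0, t + 1 + 2 * ?n)"
      by (simp add: chain_step_def s d_def Let_def)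
    have "map Suc P ! k \<le> length (Ls!k)" if "k < ?n" for k
      using lt lP that by (auto simp: Suc_le_eq)
    moreover have "data_size Ls - sum_list (map Suc P) < data_size Ls - sum_list P"
      using S lP i2 by (simp add: sl_suc)
    ultimately show ?thesis using lP i2 tb ne 2 unfolding st by (auto simp: Inv_def sl_suc s)
  next
    case 3
    hence st: "chain_step tmin tmax Ls s = (P, i + 1, t + 1)"
      by (simp add: chain_step_def s d_def Let_def)
    show ?thesis using lP i2 tb ne le 3 unfolding st by (auto simp: Inv_def s)
  next
    case 4
    hence st: "chain_step tmin tmax Ls s = (P[i := Suc (P ! i)], i - 1, t + 2)"
      by (simp add: chain_step_def s d_def Let_def)
    have u: "sum_list (P[i := Suc (P ! i)]) = Suc (sum_list P)" using sl_upd lP i2 by simp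
    have "P[i := Suc (P ! i)] ! k \<le> length (Ls!k)" if "k < ?n" for k
      using lt le that lP by (cases "k = i+1"; cases "k = i") (auto simp: nth_list_update Suc_le_eq)
    then show ?thesis using u lP i2 tb ne S unfolding st by (auto simp: Inv_def s)
  qed
qed

theorem mainTheorem3:
  shows "\<exists>C::nat. \<forall>(Ls::real list list) (tmin::real) (tmax::real).
           length Ls \<ge> 2 \<and> (\<forall>L\<in>set Ls. sorted L) \<and> 0 \<le> tmin \<and> tmin \<le> tmax \<longrightarrow>
           (\<exists>P i t. chain_run tmin tmax Ls = Some (P, i, t) \<and> t \<le> C * data_size Ls)"
proof (intro exI[of _ 4] allI impI)
  fix Ls :: "real list list" and tmin tmax :: real
  assume h: "length Ls \<ge> 2 \<and> (\<forall>L\<in>set Ls. sorted L) \<and> 0 \<le> tmin \<and> tmin \<le> tmax"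
  let ?s0 = "(replicate (length Ls) 0, 0::nat, 0::nat)"
  have I0: "Inv Ls ?s0" using h by (simp add: Inv_def)
  have wf: "wf {(t, s). (Inv Ls s \<and> chain_cond Ls s) \<and> t = chain_step tmin tmax Ls s}"
    by (rule wf_subset[OF wf_measures[of "[\<lambda>(P,i,t). data_size Ls - sum_list P, \<lambda>(P,i,t). length Ls - i]"]])
       (use step_ok in blast)
  obtain r where r: "chain_run tmin tmax Ls = Some r"
    unfolding chain_run_def using wf_while_option_Some[OF wf _ I0] step_ok by blast
  have Ir: "Inv Ls r" and nc: "\<not> chain_cond Ls r"
    using while_option_rule[where P="Inv Ls", OF _ r[unfolded chain_run_def] I0] step_ok
      while_option_stop[OF r[unfolded chain_run_def]] by blast+
  obtain P i t where rr: "r = (P, i, t)" by (cases r)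
  have "t \<le> 4 * data_size Ls"
  proof (cases "t = 0")
    case False
    with Ir rr have ne: "\<forall>k<length Ls. Ls!k \<noteq> []" and lP: "length P = length Ls"
      and le: "\<forall>k<length Ls. P!k \<le> length (Ls!k)" and i2: "i + 2 \<le> length Ls"
      and tb: "t \<le> 3 * sum_list P + i" by (auto simp: Inv_def)
    have "sum_list P \<le> data_size Ls" using sl_le lP le by blast
    moreover have "length Ls \<le> data_size Ls" using n_le ne by blast
    ultimately show ?thesis using tb i2 by linarith
  qed simp
  thus "\<exists>P i t. chain_run tmin tmax Ls = Some (P, i, t) \<and> t \<le> 4 * data_size Ls"
    using r rr by blast
qed

end
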